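(* For any $w\in\{a,\beta\}^*$ such that $\varphi_w$ is primitive, the set $C(w)\cup C(H(w))$ is closed under derivation, where $C(x) = \{\varphi_v : v = \mathrm{cyc}^k(x),\ k\in\mathbb{N}\}$.
   Context: Morphisms on $\{0,1\}^*$: $\varphi_a: 0\mapsto 0, 1 \mapsto 10$; $\varphi_b: 0 \mapsto 0, 1\mapsto 01$; $\varphi_\alpha: 0\mapsto 01, 1\mapsto 1$; $\varphi_\beta: 0\mapsto 10, 1 \mapsto 1$; for $w=w_0\cdots w_{m-1}$, $\varphi_w = \varphi_{w_0}\circ\cdots\circ\varphi_{w_{m-1}}$. $\mathrm{cyc}(u_0u_1\cdots u_{n-1}) = u_1\cdots u_{n-1}u_0$. $H$ is the monoid morphism on $\{a,b,\alpha,\beta\}^*$ with $H(a)=H(b)=b$, $H(\alpha)=\alpha$, $H(\beta)=\beta$. A morphism is primitive if some power maps every letter to a word containing every letter; a substitution is a morphism $\psi$ with a letter $c$, $\psi(c)=cx$, $x$ nonempty, $|\psi^n(c)|\to\infty$. Derived word: for a uniformly recurrent word $\mathbf{u}$ and factor $v$, a return word of $v$ is a factor $r$ such that $rv$ is a factor in which $v$ occurs exactly twice (as prefix and suffix); with $r_0,\dots,r_k$ all return words and $\mathbf{u}=p\,r_{s_0}r_{s_1}\cdots$, $|p|$ the first occurrence of $v$, $\mathbf{d}_{\mathbf{u}}(v)=s_0s_1\cdots$, up to permutation of letters. A finite set $M$ of primitive substitutions is closed under derivation if for every $\varphi\in M$, every fixed point $\mathbf{u}$ of $\varphi$ and every factor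 $v$ of $\mathbf{u}$, $\mathbf{d}_{\mathbf{u}}(v)$ is fixed by some $\psi\in M$. *)

theory Defs
  imports Main "HOL-Library.Infinite_Set"
begin

text \<open>Letters of the binary alphabet are the naturals 0 and 1 (derived words may use
  arbitrary naturals as letters).\<close>

datatype gen = GA | GB | GAl | GBe

definition ext :: "(nat \<Rightarrow> nat list) \<Rightarrow> nat list \<Rightarrow> nat list" where
  "ext \<psi> w = concat (map \<psi> w)"

fun phi :: "gen \<Rightarrow> nat \<Rightarrow> nat list" where
  "phi GA c  = (if c = 0 then [0] else if c = 1 then [1,0] else [c])"
| "phi GB c  = (if c = 0 then [0] else if c = 1 then [0,1] else [c])"
| "phi GAl c = (if c = 0 then [0,1] else if c = 1 then [1] else [c])"
| "phi GBe c = (if c = 0 then [1,0] else if c = 1 then [1] else [c])"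

fun phi_word :: "gen list \<Rightarrow> nat \<Rightarrow> nat list" where
  "phi_word [] = (\<lambda>c. [c])"
| "phi_word (g # w) = (\<lambda>c. ext (phi g) (phi_word w c))"

fun H :: "gen \<Rightarrow> gen" where
  "H GA = GB" | "H GB = GB" | "H GAl = GAl" | "H GBe = GBe"

definition Cset :: "gen list \<Rightarrow> (nat \<Rightarrow> nat list) set" where
  "Cset x = {phi_word (rotate k x) | k. True}"

definition primitive_morph :: "(nat \<Rightarrow> nat list) \<Rightarrow> bool" where
  "primitive_morph \<psi> \<longleftrightarrow>
     (\<exists>n\<ge>1. \<forall>c\<in>{0,1}. \<forall>d\<in>{0,1::nat}. d \<in> set ((ext \<psi> ^^ n) [c]))"

definition substitution :: "(nat \<Rightarrow> nat list) \<Rightarrow> bool" where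
  "substitution \<psi> \<longleftrightarrow>
     (\<exists>c\<in>{0,1::nat}. \<exists>x. x \<noteq> [] \<and> \<psi> c = c # x \<and>
        filterlim (\<lambda>n. length ((ext \<psi> ^^ n) [c])) at_top sequentially)"

definition pref :: "(nat \<Rightarrow> nat) \<Rightarrow> nat \<Rightarrow> nat list" where
  "pref u n = map u [0..<n]"

text \<open>u is an infinite binary word with psi(u) = u (the infinite concatenation
  psi(u0)psi(u1)... equals u).\<close>
definition bin_fixed_point :: "(nat \<Rightarrow> nat list) \<Rightarrow> (nat \<Rightarrow> nat) \<Rightarrow> bool" where
  "bin_fixed_point \<psi> u \<longleftrightarrow>
     (\<forall>n. u n \<in> {0,1}) \<and>
     (\<forall>n. ext \<psi> (pref u n) = pref u (length (ext \<psi> (pref u n)))) \<and>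
     (\<forall>N. \<exists>n. N \<le> length (ext \<psi> (pref u n)))"

definition occurs_at :: "(nat \<Rightarrow> nat) \<Rightarrow> nat list \<Rightarrow> nat \<Rightarrow> bool" where
  "occurs_at u v i \<longleftrightarrow> (\<forall>j<length v. u (i + j) = v ! j)"

definition factor :: "nat list \<Rightarrow> (nat \<Rightarrow> nat) \<Rightarrow> bool" where
  "factor v u \<longleftrightarrow> (\<exists>i. occurs_at u v i)"

text \<open>n-th occurrence of v in u (occurrences listed increasingly), and n-th return word
  r = u[p_n, p_(n+1)). The derived word d_u(v) is the sequence of return words coded by
  letters; being defined up to a permutation of letters, it is represented by the sequence
  ret_seq u v itself, and any injective coding of its values is a representative.\<close>
definition occ_pos :: "(nat \<Rightarrow> nat) \<Rightarrow> nat list \<Rightarrow> nat \<Rightarrow> nat" where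
  "occ_pos u v n = enumerate {i. occurs_at u v i} n"

definition ret_seq :: "(nat \<Rightarrow> nat) \<Rightarrow> nat list \<Rightarrow> nat \<Rightarrow> nat list" where
  "ret_seq u v n = map u [occ_pos u v n..<occ_pos u v (Suc n)]"

definition derived_fixed_by :: "(nat \<Rightarrow> nat) \<Rightarrow> nat list \<Rightarrow> (nat \<Rightarrow> nat list) \<Rightarrow> bool" where
  "derived_fixed_by u v \<psi> \<longleftrightarrow>
     (\<exists>\<pi> :: nat list \<Rightarrow> nat. inj_on \<pi> (range (ret_seq u v)) \<and>
        bin_fixed_point \<psi> (\<pi> \<circ> ret_seq u v))"

definition closed_under_derivation :: "(nat \<Rightarrow> nat list) set \<Rightarrow> bool" where
  "closed_under_derivation M \<longleftrightarrow>
     finite M \<and> (\<forall>\<phi>\<in>M. primitive_morph \<phi> \<and> substitution \<phi>) \<and>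
     (\<forall>\<phi>\<in>M. \<forall>u. bin_fixed_point \<phi> u \<longrightarrow>
        (\<forall>v. factor v u \<longrightarrow> (\<exists>\<psi>\<in>M. derived_fixed_by u v \<psi>)))"

end

theory Submission
  imports Defs
begin


definition bin :: "(nat \<Rightarrow> nat) \<Rightarrow> bool" where "bin x \<longleftrightarrow> (\<forall>n. x n \<in> {0,1})"
definition nonerasing :: "(nat \<Rightarrow> nat list) \<Rightarrow> bool" where "nonerasing f \<longleftrightarrow> (\<forall>c. f c \<noteq> [])"
definition img :: "(nat \<Rightarrow> nat list) \<Rightarrow> (nat \<Rightarrow> nat) \<Rightarrow> nat \<Rightarrow> nat" where
  "img f x j = ext f (pref x (Suc j)) ! j"
definition Ps :: "(nat \<Rightarrow> nat list) \<Rightarrow> (nat \<Rightarrow> nat) \<Rightarrow> nat \<Rightarrow> nat" where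
  "Ps f x k = length (ext f (pref x k))"
definition isp :: "nat list \<Rightarrow> (nat \<Rightarrow> nat) \<Rightarrow> bool" where
  "isp xs z \<longleftrightarrow> (\<forall>j<length xs. xs ! j = z j)"

lemma ext_Nil[simp]: "ext f [] = []" by (simp add: ext_def)
lemma ext_Cons[simp]: "ext f (c # w) = f c @ ext f w" by (simp add: ext_def)
lemma ext_append[simp]: "ext f (u @ v) = ext f u @ ext f v" by (simp add: ext_def)
lemma pref_0[simp]: "pref x 0 = []" by (simp add: pref_def)
lemma pref_Suc: "pref x (Suc n) = pref x n @ [x n]" by (simp add: pref_def)
lemma length_pref[simp]: "length (pref x n) = n" by (simp add: pref_def)
lemma nth_pref[simp]: "j < n \<Longrightarrow> pref x n ! j = x j" by (simp add: pref_def)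

lemma len_ext_ge: "nonerasing f \<Longrightarrow> length w \<le> length (ext f w)"
proof (induction w)
  case (Cons c w)
  then have "f c \<noteq> []" by (simp add: nonerasing_def)
  then have "length (f c) \<ge> 1" by (cases "f c") auto
  with Cons show ?case by simp
qed simp

lemma pref_prefix: "m \<le> n \<Longrightarrow> pref x n = pref x m @ map x [m..<n]"
proof -
  assume "m \<le> n"
  then have "[0..<n] = [0..<m] @ [m..<n]" using upt_add_eq_append[of 0 m "n-m"] by simp
  then show ?thesis by (simp add: pref_def)
qed

lemma img_nth:
  assumes ne: "nonerasing f" and j: "j < length (ext f (pref x n))"
  shows "img f x j = ext f (pref x n) ! j"
proof (cases "n \<le> Suc j")
  case True
  then have "pref x (Suc j) = pref x n @ map x [n..<Suc j]" by (rule pref_prefix)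
  then show ?thesis using j by (simp add: img_def nth_append)
next
  case False
  then have e: "pref x n = pref x (Suc j) @ map x [Suc j..<n]" by (intro pref_prefix) simp
  have "Suc j \<le> length (ext f (pref x (Suc j)))" using len_ext_ge[OF ne, of "pref x (Suc j)"] by simp
  then show ?thesis by (simp add: img_def e nth_append)
qed

lemma isp_img: "nonerasing f \<Longrightarrow> isp (ext f (pref x n)) (img f x)"
  unfolding isp_def using img_nth by metis

lemma img_eqI:
  assumes ne: "nonerasing f" and h: "\<And>m. isp (ext f (pref x m)) z"
  shows "img f x = z"
proof
  fix j
  have "Suc j \<le> length (ext f (pref x (Suc j)))" using len_ext_ge[OF ne, of "pref x (Suc j)"] by simp
  then show "img f x j = z j" using h[of "Suc j"] by (simp add: img_def isp_def)
qed

lemma Ps_0[simp]: "Ps f x 0 = 0" by (simp add: Ps_def)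
lemma Ps_Suc: "Ps f x (Suc k) = Ps f x k + length (f (x k))"
  by (simp add: Ps_def pref_Suc)

lemma img_block:
  assumes ne: "nonerasing f" and i: "i < length (f (x k))"
  shows "img f x (Ps f x k + i) = f (x k) ! i"
proof -
  have "img f x (Ps f x k + i) = ext f (pref x (Suc k)) ! (Ps f x k + i)"
    by (rule img_nth[OF ne]) (simp add: pref_Suc Ps_def i)
  also have "\<dots> = f (x k) ! i" by (simp add: pref_Suc Ps_def nth_append)
  finally show ?thesis .
qed

lemma block_exists:
  assumes ne: "nonerasing f"
  shows "\<exists>k i. j = Ps f x k + i \<and> i < length (f (x k))"
proof (induction j)
  case 0
  have "f (x 0) \<noteq> []" using ne by (simp add: nonerasing_def)
  then show ?case by (intro exI[of _ 0] exI[of _ 0]) simp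
next
  case (Suc j)
  then obtain k i where ki: "j = Ps f x k + i" "i < length (f (x k))" by blast
  show ?case
  proof (cases "Suc i < length (f (x k))")
    case True then show ?thesis using ki by (intro exI[of _ k] exI[of _ "Suc i"]) simp
  next
    case False
    have "f (x (Suc k)) \<noteq> []" using ne by (simp add: nonerasing_def)
    then show ?thesis using ki False
      by (intro exI[of _ "Suc k"] exI[of _ 0]) (simp add: Ps_Suc)
  qed
qed

lemma Ps_strict_mono: "nonerasing f \<Longrightarrow> strict_mono (Ps f x)"
  unfolding strict_mono_Suc_iff
proof
  fix k assume "nonerasing f"
  then have "f (x k) \<noteq> []" by (simp add: nonerasing_def)
  then show "Ps f x k < Ps f x (Suc k)" by (simp add: Ps_Suc)
qed

lemma map_img_Ps:
  assumes ne: "nonerasing f"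
  shows "a \<le> b \<Longrightarrow> map (img f x) [Ps f x a..<Ps f x b] = ext f (map x [a..<b])"
proof (induction b)
  case 0 then show ?case by simp
next
  case (Suc b)
  show ?case
  proof (cases "a = Suc b")
    case True then show ?thesis by simp
  next
    case False
    then have ab: "a \<le> b" using Suc.prems by simp
    have m: "Ps f x a \<le> Ps f x b" using Ps_strict_mono[OF ne] ab by (simp add: strict_mono_less_eq)
    have "[Ps f x a..<Ps f x (Suc b)] = [Ps f x a..<Ps f x b] @ [Ps f x b..<Ps f x b + length (f (x b))]"
      using upt_add_eq_append[OF m, of "length (f (x b))"] m by (simp add: Ps_Suc)
    moreover have "map (img f x) [Ps f x b..<Ps f x b + length (f (x b))] = f (x b)"
      by (rule nth_equalityI) (auto simp: img_block[OF ne])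
    ultimately show ?thesis using Suc.IH[OF ab] ab by simp
  qed
qed

lemma pref_img: assumes ne: "nonerasing f" shows "pref (img f x) (Ps f x m) = ext f (pref x m)"
proof (rule nth_equalityI)
  fix i assume "i < length (pref (img f x) (Ps f x m))"
  then have "i < length (ext f (pref x m))" by (simp add: Ps_def)
  then show "pref (img f x) (Ps f x m) ! i = ext f (pref x m) ! i"
    using img_nth[OF ne, of i x m] by (simp add: Ps_def)
qed (simp add: Ps_def)

lemma ext_ext: "ext f (ext g w) = ext (\<lambda>c. ext f (g c)) w"
  by (induction w) auto

lemma nonerasing_comp: "nonerasing f \<Longrightarrow> nonerasing g \<Longrightarrow> nonerasing (\<lambda>c. ext f (g c))"
  unfolding nonerasing_def
proof
  fix c assume a: "\<forall>c. f c \<noteq> []" "\<forall>c. g c \<noteq> []"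
  then obtain d t where "g c = d # t" by (meson list.exhaust)
  then show "ext f (g c) \<noteq> []" using a by simp
qed

lemma img_comp:
  assumes "nonerasing f" "nonerasing g"
  shows "img (\<lambda>c. ext f (g c)) x = img f (img g x)"
proof (rule img_eqI[OF nonerasing_comp[OF assms]])
  fix m
  have "ext (\<lambda>c. ext f (g c)) (pref x m) = ext f (pref (img g x) (Ps g x m))"
    by (simp add: ext_ext pref_img assms)
  then show "isp (ext (\<lambda>c. ext f (g c)) (pref x m)) (img f (img g x))"
    using isp_img[OF assms(1)] by simp
qed

lemma ext_single: "ext (\<lambda>c. [c]) w = w" by (induction w) auto

lemma phi_word_append: "phi_word (v @ w) c = ext (phi_word v) (phi_word w c)"
  by (induction v arbitrary: c) (auto simp: ext_single ext_ext)

lemma nonerasing_phi: "nonerasing (phi g)"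
  by (cases g) (auto simp: nonerasing_def)

lemma nonerasing_phi_word: "nonerasing (phi_word w)"
proof (induction w)
  case Nil then show ?case by (simp add: nonerasing_def)
next
  case (Cons g w)
  have "phi_word (g # w) = (\<lambda>c. ext (phi g) (phi_word w c))" by simp
  then show ?case using nonerasing_comp[OF nonerasing_phi Cons] by simp
qed

lemma img_phi_word_Cons: "img (phi_word (g # r)) x = img (phi g) (img (phi_word r) x)"
proof -
  have "phi_word (g # r) = (\<lambda>c. ext (phi g) (phi_word r c))" by simp
  then show ?thesis using img_comp[OF nonerasing_phi nonerasing_phi_word] by simp
qed

lemma img_phi_word_snoc: "img (phi_word (r @ [g])) x = img (phi_word r) (img (phi g) x)"
proof -
  have "phi_word (r @ [g]) = (\<lambda>c. ext (phi_word r) (phi g c))"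
    by (rule ext) (simp add: phi_word_append ext_def)
  then show ?thesis using img_comp[OF nonerasing_phi_word nonerasing_phi] by simp
qed

lemma set_ext_bin: "set xs \<subseteq> {0,1} \<Longrightarrow> (\<forall>c\<in>{0,1}. set (f c) \<subseteq> {0,1}) \<Longrightarrow> set (ext f xs) \<subseteq> {0,1::nat}"
  by (induction xs) auto

lemma set_phi_bin: "c \<in> {0,1} \<Longrightarrow> set (phi g c) \<subseteq> {0,1}"
  by (cases g) auto

lemma set_phi_word_bin: "c \<in> {0,1} \<Longrightarrow> set (phi_word w c) \<subseteq> {0,1}"
proof (induction w)
  case (Cons g w)
  then show ?case using set_ext_bin[of "phi_word w c" "phi g"] set_phi_bin by simp
qed simp

lemma bin_img:
  assumes "\<forall>c\<in>{0,1}. set (f c) \<subseteq> {0,1}" "nonerasing f" "bin x"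
  shows "bin (img f x)"
  unfolding bin_def
proof
  fix j
  have "set (pref x (Suc j)) \<subseteq> {0,1}" using assms(3) unfolding bin_def pref_def by (auto, metis less_Suc_eq neq0_conv) 
  then have s: "set (ext f (pref x (Suc j))) \<subseteq> {0,1}" using set_ext_bin assms(1) by blast
  have "Suc j \<le> length (ext f (pref x (Suc j)))" using len_ext_ge[OF assms(2), of "pref x (Suc j)"] by simp
  then have "img f x j \<in> set (ext f (pref x (Suc j)))" unfolding img_def by (intro nth_mem) simp
  then show "img f x j \<in> {0,1}" by (rule subsetD[OF s])
qed

lemma bin_img_phi: assumes "bin x" shows "bin (img (phi g) x)"
proof (rule bin_img[OF _ nonerasing_phi assms])
  show "\<forall>c\<in>{0,1}. set (phi g c) \<subseteq> {0,1}" using set_phi_bin by blast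
qed

lemma bin_img_phi_word: assumes "bin x" shows "bin (img (phi_word w) x)"
proof (rule bin_img[OF _ nonerasing_phi_word assms])
  show "\<forall>c\<in>{0,1}. set (phi_word w c) \<subseteq> {0,1}" using set_phi_word_bin by blast
qed



definition Occ :: "(nat \<Rightarrow> nat) \<Rightarrow> nat list \<Rightarrow> nat set" where
  "Occ x v = {i. occurs_at x v i}"

lemma occurs_at_Nil[simp]: "occurs_at x [] i" by (simp add: occurs_at_def)
lemma occurs_at_Cons: "occurs_at x (c # v) i \<longleftrightarrow> x i = c \<and> occurs_at x v (Suc i)"
  unfolding occurs_at_def
  by (auto simp: less_Suc_eq_0_disj)

fun prs :: "nat \<Rightarrow> nat list \<Rightarrow> nat list" where
  "prs d [] = []"
| "prs d [c] = []"
| "prs d (c # c' # rest) = (if c' = 1 - d then (1 - d) # prs d rest else d # prs d (c' # rest))"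

lemma occurs_bin:
  assumes "bin y" "occurs_at y u j" shows "set u \<subseteq> {0,1}"
proof
  fix c assume "c \<in> set u"
  then obtain i where "i < length u" "u ! i = c" by (meson in_set_conv_nth)
  then show "c \<in> {0,1}" using assms unfolding occurs_at_def bin_def by metis
qed

context
  fixes f :: "nat \<Rightarrow> nat list" and d e :: nat and x' :: "nat \<Rightarrow> nat"
  assumes sig: "\<forall>c\<in>{0,1}. f c = (if c = e then [d,e] else [d])"
    and de: "(d = 0 \<and> e = 1) \<or> (d = 1 \<and> e = 0)"
    and bx: "bin x'"
    and ne: "nonerasing f"
begin

lemma fx: "f (x' k) = (if x' k = e then [d,e] else [d])"
  using sig bx unfolding bin_def by blast

lemma xe: "x' k \<noteq> e \<Longrightarrow> x' k = d"
  using bx de unfolding bin_def by (metis empty_iff insert_iff)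

lemma fsub: "\<forall>c\<in>{0,1}. set (f c) \<subseteq> {0,1}"
  using sig de by auto

lemma biny: "bin (img f x')" using bin_img[OF fsub ne bx] .

lemma y_pos: "img f x' (Ps f x' k) = d"
  using img_block[OF ne, of 0 x' k] fx[of k] by (auto split: if_splits)

lemma Ps_Suc': "Ps f x' (Suc k) = Ps f x' k + (if x' k = e then 2 else 1)"
  using fx[of k] by (simp add: Ps_Suc)

lemma y_pos1: "img f x' (Suc (Ps f x' k)) = (if x' k = e then e else d)"
proof (cases "x' k = e")
  case True
  then show ?thesis using img_block[OF ne, of 1 x' k] fx[of k] by simp
next
  case False
  then show ?thesis using y_pos[of "Suc k"] Ps_Suc'[of k] by simp
qed

lemma y_d_cut: "img f x' j = d \<Longrightarrow> \<exists>k. j = Ps f x' k"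
proof -
  assume a: "img f x' j = d"
  obtain k i where ki: "j = Ps f x' k + i" "i < length (f (x' k))" using block_exists[OF ne] by blast
  show ?thesis
  proof (cases i)
    case 0 then show ?thesis using ki by auto
  next
    case (Suc i')
    then have "x' k = e" "i = 1" using ki fx[of k] by (auto split: if_splits)
    then have "img f x' j = e" using img_block[OF ne, of 1 x' k] fx[of k] ki by simp
    then show ?thesis using a de by auto
  qed
qed

lemma y_e: "img f x' j = e \<Longrightarrow> \<exists>k. j = Suc (Ps f x' k)"
proof -
  assume a: "img f x' j = e"
  obtain k i where ki: "j = Ps f x' k + i" "i < length (f (x' k))" using block_exists[OF ne] by blast
  show ?thesis
  proof (cases i)
    case 0 then have "img f x' j = d" using ki y_pos by simp
    then show ?thesis using a de by auto
  next
    case (Suc i')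
    then have "i = 1" using ki fx[of k] by (auto split: if_splits)
    then show ?thesis using ki by auto
  qed
qed

lemma parse:
  "dd = d \<Longrightarrow> u \<noteq> [] \<Longrightarrow> hd u = d \<Longrightarrow> occurs_at (img f x') u j \<Longrightarrow>
   (\<forall>k. occurs_at (img f x') u (Ps f x' k) \<longleftrightarrow> occurs_at x' (prs dd u) k) \<and>
   length (prs dd u) + (if last u = d then 1 else 0) = count_list u d"
proof (induction dd u arbitrary: j rule: prs.induct)
  case (1 d) then show ?case by simp
next
  case (2 d' c)
  then show ?case using y_pos by (simp add: occurs_at_Cons)
next
  case (3 d' c c' rest)
  let ?y = "img f x'"
  have dd: "d' = d" "c = d" using 3 by auto
  have ej: "1 - d = e" using de by auto
  have bu: "set (c # c' # rest) \<subseteq> {0,1}" using occurs_bin[OF biny 3(6)] .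
  have yj: "?y j = d" "?y (Suc j) = c'" "occurs_at ?y rest (Suc (Suc j))"
    using 3(6) dd by (auto simp: occurs_at_Cons)
  obtain k0 where k0: "j = Ps f x' k0" using y_d_cut yj(1) by blast
  show ?case
  proof (cases "c' = e")
    case True
    have xk0: "x' k0 = e" using yj(2) y_pos1[of k0] k0 True de by (auto split: if_splits)
    have pr: "prs d' (c # c' # rest) = e # prs d rest" using True dd ej by simp
    show ?thesis
    proof (cases "rest = []")
      case True
      have "\<forall>k. occurs_at ?y [c, c'] (Ps f x' k) \<longleftrightarrow> occurs_at x' [e] k"
        using y_pos y_pos1 de \<open>c' = e\<close> dd by (auto simp: occurs_at_Cons)
      then show ?thesis using True pr \<open>c' = e\<close> dd de by auto
    next
      case False
      have "Suc (Suc j) = Ps f x' (Suc k0)" using k0 xk0 Ps_Suc'[of k0] by simp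
      then have "hd rest = d" using yj(3) False y_pos[of "Suc k0"]
        by (cases rest) (auto simp: occurs_at_Cons)
      then have IH: "(\<forall>k. occurs_at ?y rest (Ps f x' k) \<longleftrightarrow> occurs_at x' (prs d rest) k) \<and>
        length (prs d rest) + (if last rest = d then 1 else 0) = count_list rest d"
        using "3.IH"(1)[OF _ _ False] True dd ej yj(3) by auto
      have "\<forall>k. occurs_at ?y (c # c' # rest) (Ps f x' k) \<longleftrightarrow> occurs_at x' (e # prs d rest) k"
      proof
        fix k
        have "occurs_at ?y (c # c' # rest) (Ps f x' k) \<longleftrightarrow> x' k = e \<and> occurs_at ?y rest (Suc (Suc (Ps f x' k)))"
          using y_pos[of k] y_pos1[of k] dd \<open>c' = e\<close> de by (auto simp: occurs_at_Cons)
        also have "\<dots> \<longleftrightarrow> x' k = e \<and> occurs_at ?y rest (Ps f x' (Suc k))"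
          using Ps_Suc'[of k] by auto
        also have "\<dots> \<longleftrightarrow> occurs_at x' (e # prs d rest) k"
          using IH by (simp add: occurs_at_Cons)
        finally show "occurs_at ?y (c # c' # rest) (Ps f x' k) \<longleftrightarrow> occurs_at x' (e # prs d rest) k" .
      qed
      then show ?thesis using pr IH False dd \<open>c' = e\<close> de by auto
    qed
  next
    case False
    have c'd: "c' = d" using bu False de by auto
    have pr: "prs d' (c # c' # rest) = d # prs d (c' # rest)" using False dd ej by simp
    have IH: "(\<forall>k. occurs_at ?y (c' # rest) (Ps f x' k) \<longleftrightarrow> occurs_at x' (prs d (c' # rest)) k) \<and>
        length (prs d (c' # rest)) + (if last (c' # rest) = d then 1 else 0) = count_list (c' # rest) d"
      using "3.IH"(2)[of "Suc j"] False dd ej c'd 3(6) by (auto simp: occurs_at_Cons)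
    have "\<forall>k. occurs_at ?y (c # c' # rest) (Ps f x' k) \<longleftrightarrow> occurs_at x' (d # prs d (c' # rest)) k"
    proof
      fix k
      have "occurs_at ?y (c # c' # rest) (Ps f x' k) \<longleftrightarrow> x' k \<noteq> e \<and> occurs_at ?y (c' # rest) (Suc (Ps f x' k))"
        using y_pos[of k] y_pos1[of k] dd c'd de by (auto simp: occurs_at_Cons)
      also have "\<dots> \<longleftrightarrow> x' k = d \<and> occurs_at ?y (c' # rest) (Ps f x' (Suc k))"
        using Ps_Suc'[of k] xe[of k] de by auto
      also have "\<dots> \<longleftrightarrow> occurs_at x' (d # prs d (c' # rest)) k"
        using IH by (simp add: occurs_at_Cons)
      finally show "occurs_at ?y (c # c' # rest) (Ps f x' k) \<longleftrightarrow> occurs_at x' (d # prs d (c' # rest)) k" .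
    qed
    then show ?thesis using pr IH dd c'd by auto
  qed
qed

lemma occ_parse:
  assumes "u \<noteq> []" "hd u = d" "Occ (img f x') u \<noteq> {}"
  shows "Occ (img f x') u = Ps f x' ` Occ x' (prs d u)"
proof -
  obtain j where j: "occurs_at (img f x') u j" using assms(3) by (auto simp: Occ_def)
  have P: "\<forall>k. occurs_at (img f x') u (Ps f x' k) \<longleftrightarrow> occurs_at x' (prs d u) k"
    using parse[OF refl assms(1,2) j] by blast
  show ?thesis
  proof
    show "Occ (img f x') u \<subseteq> Ps f x' ` Occ x' (prs d u)"
    proof
      fix i assume "i \<in> Occ (img f x') u"
      then have oi: "occurs_at (img f x') u i" by (simp add: Occ_def)
      then have "img f x' i = d" using assms(1,2) by (cases u) (auto simp: occurs_at_Cons)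
      then obtain k where "i = Ps f x' k" using y_d_cut by blast
      then show "i \<in> Ps f x' ` Occ x' (prs d u)" using P oi by (auto simp: Occ_def)
    qed
  next
    show "Ps f x' ` Occ x' (prs d u) \<subseteq> Occ (img f x') u" using P by (auto simp: Occ_def)
  qed
qed

lemma occ_e:
  assumes "v \<noteq> []" "hd v = e"
  shows "Occ (img f x') v = Suc ` Occ (img f x') (d # v)"
proof
  show "Occ (img f x') v \<subseteq> Suc ` Occ (img f x') (d # v)"
  proof
    fix i assume "i \<in> Occ (img f x') v"
    then have oi: "occurs_at (img f x') v i" by (simp add: Occ_def)
    then have "img f x' i = e" using assms by (cases v) (auto simp: occurs_at_Cons)
    then obtain k where k: "i = Suc (Ps f x' k)" using y_e by blast
    then have "occurs_at (img f x') (d # v) (Ps f x' k)" using oi y_pos[of k] by (simp add: occurs_at_Cons)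
    then show "i \<in> Suc ` Occ (img f x') (d # v)" using k by (auto simp: Occ_def)
  qed
next
  show "Suc ` Occ (img f x') (d # v) \<subseteq> Occ (img f x') v" by (auto simp: Occ_def occurs_at_Cons)
qed

lemma count_le: "count_list xs a \<le> length xs"
  by (induction xs) auto

lemma count_lt: "b \<in> set xs \<Longrightarrow> b \<noteq> a \<Longrightarrow> count_list xs a < length xs"
  by (induction xs) (auto simp: count_le less_Suc_eq_le)

lemma count_pos: "a \<in> set xs \<Longrightarrow> 1 \<le> count_list xs a"
  by (induction xs) auto

lemma count_sum: "set xs \<subseteq> {d, e} \<Longrightarrow> count_list xs d + count_list xs e = length xs"
  using de by (induction xs) auto

lemma len_prs1:
  assumes "u \<noteq> []" "hd u = d" "Occ (img f x') u \<noteq> {}"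
  shows "length (prs d u) < length u"
proof -
  obtain j where j: "occurs_at (img f x') u j" using assms(3) by (auto simp: Occ_def)
  have L: "length (prs d u) + (if last u = d then 1 else 0) = count_list u d"
    using parse[OF refl assms(1,2) j] by blast
  show ?thesis
  proof (cases "last u = d")
    case True then show ?thesis using L count_le[of u d] by simp
  next
    case False
    have "last u \<in> set u" using assms(1) by simp
    then show ?thesis using L count_lt[of "last u" u d] False by simp
  qed
qed

lemma len_prs2:
  assumes "v \<noteq> []" "hd v = e" "v \<noteq> [e]" "Occ (img f x') (d # v) \<noteq> {}"
  shows "length (prs d (d # v)) < length v"
proof -
  obtain j where j: "occurs_at (img f x') (d # v) j" using assms(4) by (auto simp: Occ_def)
  have L: "length (prs d (d # v)) + (if last v = d then 1 else 0) = 1 + count_list v d"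
    using parse[OF refl _ _ j] assms(1) by simp
  have bv: "set (d # v) \<subseteq> {0,1}" using occurs_bin[OF biny j] .
  then have sv: "set v \<subseteq> {d, e}" using de by auto
  have S: "count_list v d + count_list v e = length v" using count_sum[OF sv] .
  obtain v' where v': "v = e # v'" using assms(1,2) by (cases v) auto
  show ?thesis
  proof (cases "last v = d")
    case True
    have "1 \<le> count_list v e" using count_pos[of e v] v' by simp
    then show ?thesis using L S True by simp
  next
    case False
    have "v' \<noteq> []" using v' assms(3) by auto
    then have "last v' \<in> set v'" by simp
    moreover have "set v' \<subseteq> {d, e}" using sv v' by auto
    ultimately have "last v' \<in> {d, e}" by blast
    moreover have "last v' \<noteq> d" using False v' \<open>v' \<noteq> []\<close> by auto
    ultimately have "e \<in> set v'" using \<open>last v' \<in> set v'\<close> by auto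
    then have "2 \<le> count_list v e" using count_pos[of e v'] v' by simp
    then show ?thesis using L S False by simp
  qed
qed

lemma prs_de: "prs d [d, e] = [e]"
  using de by auto

end


lemma enum_image0:
  assumes sm: "strict_mono g" and inf: "infinite S" shows "enumerate (g ` S) 0 = g (enumerate S 0)"
proof -
  have "(LEAST n. n \<in> g ` S) = g (LEAST n. n \<in> S)"
  proof (rule Least_equality)
    obtain s0 where "s0 \<in> S" using inf infinite_imp_nonempty by blast
    then have "(LEAST n. n \<in> S) \<in> S" by (rule LeastI)
    then show "g (LEAST n. n \<in> S) \<in> g ` S" by simp
  next
    fix y assume "y \<in> g ` S"
    then obtain s where "s \<in> S" "y = g s" by auto
    then show "g (LEAST n. n \<in> S) \<le> y" using sm by (simp add: Least_le strict_mono_less_eq)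
  qed
  then show ?thesis by (simp add: enumerate_0)
qed

lemma enum_image:
  assumes sm: "strict_mono g" shows "infinite S \<Longrightarrow> enumerate (g ` S) n = g (enumerate S n)"
proof (induction n arbitrary: S)
  case 0
  then show ?case using enum_image0[OF sm] by blast
next
  case (Suc n)
  have inj: "inj g" using sm strict_mono_imp_inj_on by blast
  have e0: "enumerate (g ` S) 0 = g (enumerate S 0)" using enum_image0[OF sm Suc.prems] .
  have "enumerate (g ` S) (Suc n) = enumerate (g ` S - {g (enumerate S 0)}) n"
    using e0 by (simp only: enumerate_Suc')
  also have "g ` S - {g (enumerate S 0)} = g ` (S - {enumerate S 0})"
    using inj by (simp add: image_set_diff)
  also have "enumerate (g ` (S - {enumerate S 0})) n = g (enumerate (S - {enumerate S 0}) n)"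
    using Suc by simp
  finally show ?case by (simp only: enumerate_Suc')
qed

lemma enum_UNIV: "enumerate (UNIV :: nat set) n = n"
proof (induction n)
  case 0 then show ?case by (simp add: enumerate_0)
next
  case (Suc n)
  have "(UNIV :: nat set) - {0} = Suc ` UNIV" by (auto simp: image_iff) (metis not0_implies_Suc)
  moreover have "enumerate (UNIV :: nat set) (Suc n) = enumerate (UNIV - {enumerate (UNIV::nat set) 0}) n"
    by (rule enumerate_Suc')
  moreover have "enumerate (UNIV::nat set) 0 = 0" by (simp add: enumerate_0)
  ultimately have "enumerate (UNIV :: nat set) (Suc n) = enumerate (Suc ` UNIV) n" by simp
  also have "\<dots> = Suc n" using enum_image[of Suc UNIV n] Suc by (simp add: strict_mono_Suc_iff)
  finally show ?case .
qed

lemma occ_pos_Occ: "occ_pos x v n = enumerate (Occ x v) n"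
  by (simp add: occ_pos_def Occ_def)

lemma ret_seq_Occ: "ret_seq x v n = map x [enumerate (Occ x v) n..<enumerate (Occ x v) (Suc n)]"
  by (simp add: ret_seq_def occ_pos_Occ)

definition deq :: "(nat \<Rightarrow> nat) \<Rightarrow> nat list \<Rightarrow> (nat \<Rightarrow> nat) \<Rightarrow> bool" where
  "deq x v z \<longleftrightarrow> (\<exists>p. inj_on p (range (ret_seq x v)) \<and> (\<forall>n. p (ret_seq x v n) = z n))"

lemma deq_transfer:
  assumes r: "\<And>n. ret_seq x v n = F (ret_seq x' v' n)"
    and inj: "inj_on F (range (ret_seq x' v'))" and d: "deq x' v' z"
  shows "deq x v z"
proof -
  obtain p where p: "inj_on p (range (ret_seq x' v'))" "\<And>n. p (ret_seq x' v' n) = z n"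
    using d by (auto simp: deq_def)
  define q where "q = (\<lambda>a. p (the_inv_into (range (ret_seq x' v')) F a))"
  have rr: "range (ret_seq x v) = F ` range (ret_seq x' v')" using r by auto
  have qv: "q (F a) = p a" if "a \<in> range (ret_seq x' v')" for a
    using the_inv_into_f_f[OF inj that] by (simp add: q_def)
  have "inj_on q (range (ret_seq x v))"
  proof (rule inj_onI)
    fix a b assume a: "a \<in> range (ret_seq x v)" and b: "b \<in> range (ret_seq x v)" and e: "q a = q b"
    obtain a' where a': "a' \<in> range (ret_seq x' v')" "a = F a'" using a rr by auto
    obtain b' where b': "b' \<in> range (ret_seq x' v')" "b = F b'" using b rr by auto
    have "p a' = p b'" using e qv a' b' by simp
    then show "a = b" using inj_onD[OF p(1) _ a'(1) b'(1)] a' b' by simp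
  qed
  moreover have "\<forall>n. q (ret_seq x v n) = z n" using qv r p(2) by simp
  ultimately show ?thesis by (auto simp: deq_def)
qed

lemma deq_eq: "(\<And>n. ret_seq x v n = ret_seq x' v' n) \<Longrightarrow> deq x' v' z \<Longrightarrow> deq x v z"
  using deq_transfer[of x v id x' v' z] by simp

lemma deq_tail:
  assumes "\<And>n. ret_seq x v n = ret_seq y v' (Suc n)" "deq y v' z"
  shows "deq x v (\<lambda>n. z (Suc n))"
proof -
  obtain p where p: "inj_on p (range (ret_seq y v'))" "\<And>n. p (ret_seq y v' n) = z n"
    using assms(2) by (auto simp: deq_def)
  have "range (ret_seq x v) \<subseteq> range (ret_seq y v')" using assms(1) by auto
  then have "inj_on p (range (ret_seq x v))" using p(1) inj_on_subset by blast
  then show ?thesis using p(2) assms(1) by (auto simp: deq_def)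
qed

lemma Occ_Nil: "Occ x [] = UNIV" by (simp add: Occ_def)

lemma deq_Nil: "deq x [] x"
proof -
  have r: "ret_seq x [] n = [x n]" for n by (simp add: ret_seq_Occ Occ_Nil enum_UNIV)
  have "inj_on hd (range (ret_seq x []))" by (auto simp: r inj_on_def)
  then show ?thesis by (auto simp: deq_def r intro!: exI[of _ hd])
qed

lemma ret_block:
  assumes ne: "nonerasing f" and O: "Occ (img f x') u = Ps f x' ` Occ x' u'" and inf: "infinite (Occ x' u')"
  shows "ret_seq (img f x') u n = ext f (ret_seq x' u' n)"
proof -
  have e: "enumerate (Occ (img f x') u) m = Ps f x' (enumerate (Occ x' u') m)" for m
    using enum_image[OF Ps_strict_mono[OF ne] inf] O by simp
  have le: "enumerate (Occ x' u') n \<le> enumerate (Occ x' u') (Suc n)"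
    using enumerate_step[OF inf, of n] by simp
  show ?thesis unfolding ret_seq_Occ e using map_img_Ps[OF ne le] .
qed

lemma ret_left:
  assumes O: "Occ y v = Suc ` Occ y (c # v)" and inf: "infinite (Occ y (c # v))"
  shows "ret_seq y v n = tl (ret_seq y (c # v) n) @ [c]"
    and "ret_seq y (c # v) n \<noteq> []" and "hd (ret_seq y (c # v) n) = c"
proof -
  let ?p = "enumerate (Occ y (c # v))"
  have e: "enumerate (Occ y v) m = Suc (?p m)" for m
    using enum_image[of Suc, OF _ inf] O by (simp add: strict_mono_Suc_iff)
  have lt: "?p n < ?p (Suc n)" using enumerate_step[OF inf] by simp
  have occ: "occurs_at y (c # v) (?p m)" for m using enumerate_in_set[OF inf, of m] by (simp add: Occ_def)
  have yc: "y (?p m) = c" for m using occ[of m] by (simp add: occurs_at_Cons)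
  have r2: "ret_seq y (c # v) n = map y [?p n..<?p (Suc n)]" by (simp add: ret_seq_Occ)
  have u: "[?p n..<?p (Suc n)] = ?p n # [Suc (?p n)..<?p (Suc n)]" using lt upt_conv_Cons by blast
  show "ret_seq y (c # v) n \<noteq> []" "hd (ret_seq y (c # v) n) = c" using r2 u yc by auto
  have "[Suc (?p n)..<Suc (?p (Suc n))] = [Suc (?p n)..<?p (Suc n)] @ [?p (Suc n)]"
    using lt by simp
  then show "ret_seq y v n = tl (ret_seq y (c # v) n) @ [c]"
    by (simp add: ret_seq_Occ e r2[unfolded ret_seq_Occ] u yc)
qed

lemma inj_tl: "inj_on (\<lambda>r. tl r @ [c]) {r. r \<noteq> [] \<and> hd r = c}"
proof (rule inj_onI)
  fix a b assume "a \<in> {r. r \<noteq> [] \<and> hd r = c}" "b \<in> {r. r \<noteq> [] \<and> hd r = c}" "tl a @ [c] = tl b @ [c]"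
  then show "a = b" by (cases a; cases b) auto
qed

lemma map_Suc_shift: "(\<And>j. x j = y (Suc j)) \<Longrightarrow> map y [Suc a..<Suc b] = map x [a..<b]"
  by (simp only: map_Suc_upt[symmetric] map_map) (simp add: comp_def)

lemma ret_shift:
  assumes xy: "\<And>j. x j = y (Suc j)" and O: "Occ y v = Suc ` Occ x v" and inf: "infinite (Occ x v)"
  shows "ret_seq y v n = ret_seq x v n"
proof -
  have e: "enumerate (Occ y v) m = Suc (enumerate (Occ x v) m)" for m
    using enum_image[of Suc, OF _ inf] O by (simp add: strict_mono_Suc_iff)
  show ?thesis unfolding ret_seq_Occ e using map_Suc_shift[of x y, OF xy] by simp
qed

lemma ret_shift0:
  assumes xy: "\<And>j. x j = y (Suc j)" and O: "Occ y v = insert 0 (Suc ` Occ x v)" and inf: "infinite (Occ x v)"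
  shows "ret_seq x v n = ret_seq y v (Suc n)"
proof -
  have e0: "enumerate (Occ y v) 0 = 0" using O by (simp add: Least_eq_0 enumerate_0)
  have "Occ y v - {0} = Suc ` Occ x v" using O by auto
  then have e: "enumerate (Occ y v) (Suc m) = Suc (enumerate (Occ x v) m)" for m
    using enum_image[of Suc, OF _ inf] e0 by (simp only: enumerate_Suc') (simp add: strict_mono_Suc_iff)
  show ?thesis unfolding ret_seq_Occ e using map_Suc_shift[of x y, OF xy] by simp
qed



lemma sigB: "\<forall>c\<in>{0,1}. phi GB c = (if c = 1 then [0,1] else [0])" by auto
lemma sigBe: "\<forall>c\<in>{0,1}. phi GBe c = (if c = 0 then [1,0] else [1])" by auto

lemma ext_hd_d:
  assumes sig: "\<forall>c\<in>{0,1}. f c = (if c = e then [d,e] else [d])"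
  shows "set (c # w) \<subseteq> {0,1} \<Longrightarrow> \<exists>t. ext f (c # w) = d # t"
  using sig by auto

lemma inj_ext_sig:
  assumes sig: "\<forall>c\<in>{0,1}. f c = (if c = e then [d,e] else [d])"
    and de: "(d = 0 \<and> e = 1) \<or> (d = 1 \<and> e = 0)"
  shows "inj_on (ext f) {w. set w \<subseteq> {0,1}}"
proof -
  have "\<forall>w'. set w \<subseteq> {0,1} \<longrightarrow> set w' \<subseteq> {0,1} \<longrightarrow> ext f w = ext f w' \<longrightarrow> w = w'" for w
  proof (induction w)
    case Nil
    show ?case
    proof (intro allI impI)
      fix w' :: "nat list" assume "set w' \<subseteq> {0,1}" "ext f [] = ext f w'"
      then show "[] = w'" using sig by (cases w'; auto split: if_splits)
    qed
  next
    case (Cons a w)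
    show ?case
    proof (intro allI impI)
      fix w' :: "nat list" assume a: "set (a # w) \<subseteq> {0,1}" "set w' \<subseteq> {0,1}" "ext f (a # w) = ext f w'"
      show "a # w = w'"
      proof (cases w')
        case Nil then show ?thesis using a sig by (auto split: if_splits)
      next
        case (Cons b w2)
        have fa: "f a = (if a = e then [d,e] else [d])" "f b = (if b = e then [d,e] else [d])"
          using a sig Cons by auto
        have ab: "a \<in> {0,1}" "b \<in> {0,1}" using a Cons by auto
        show ?thesis
        proof (cases "a = b")
          case True
          then have "ext f w = ext f w2" using a(3) Cons by simp
          then show ?thesis using Cons.IH a Cons True by auto
        next
          case False
          then have "(a = e \<and> b \<noteq> e) \<or> (a \<noteq> e \<and> b = e)" using ab de by auto
          then show ?thesis
          proof
            assume h: "a = e \<and> b \<noteq> e"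
            then have "e # ext f w = ext f w2" using a(3) Cons fa by simp
            then show ?thesis
            proof (cases w2)
              case Nil then show ?thesis using \<open>e # ext f w = ext f w2\<close> by simp
            next
              case (Cons c w3)
              then obtain t where "ext f w2 = d # t" using ext_hd_d[OF sig] a(2) \<open>w' = b # w2\<close> by fastforce
              then show ?thesis using \<open>e # ext f w = ext f w2\<close> de by auto
            qed
          next
            assume h: "a \<noteq> e \<and> b = e"
            then have "ext f w = e # ext f w2" using a(3) Cons fa by simp
            then show ?thesis
            proof (cases w)
              case Nil then show ?thesis using \<open>ext f w = e # ext f w2\<close> by simp
            next
              case (Cons c w3)
              then obtain t where "ext f w = d # t" using ext_hd_d[OF sig] a(1) by fastforce
              then show ?thesis using \<open>ext f w = e # ext f w2\<close> de by auto
            qed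
          qed
        qed
      qed
    qed
  qed
  then show ?thesis by (auto simp: inj_on_def)
qed

lemma isp_Cons: "isp (c # xs) y \<Longrightarrow> isp xs (\<lambda>j. y (Suc j))"
  by (auto simp: isp_def)
lemma isp_append: "isp (xs @ t) y \<Longrightarrow> isp xs y"
  unfolding isp_def
proof (intro allI impI)
  fix j assume a: "\<forall>j<length (xs @ t). (xs @ t) ! j = y j" "j < length xs"
  then show "xs ! j = y j" using a(1)[rule_format, of j] by (simp add: nth_append)
qed

lemma pref_Suc_Cons: "pref z (Suc m) = z 0 # pref (\<lambda>j. z (Suc j)) m"
  unfolding pref_def
  by (simp only: upt_conv_Cons[OF zero_less_Suc] map_Suc_upt[symmetric] list.map map_map comp_def)

lemma ext_GB_GA: "set w \<subseteq> {0,1} \<Longrightarrow> ext (phi GB) w @ [0] = 0 # ext (phi GA) w"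
  by (induction w) auto

lemma bin_pref: "bin x \<Longrightarrow> set (pref x m) \<subseteq> {0,1}"
  unfolding bin_def pref_def by (simp add: image_subset_iff)

lemma img_GA_GB:
  assumes bx: "bin x'"
  shows "img (phi GA) x' = (\<lambda>j. img (phi GB) x' (Suc j))" and "img (phi GB) x' 0 = 0"
proof -
  have "x' 0 \<in> {0,1}" using bx by (simp add: bin_def)
  then show "img (phi GB) x' 0 = 0"
    using img_block[OF nonerasing_phi, of 0 GB x' 0] by auto
  show "img (phi GA) x' = (\<lambda>j. img (phi GB) x' (Suc j))"
  proof (rule img_eqI[OF nonerasing_phi])
    fix m
    have i: "isp (ext (phi GB) (pref x' (Suc m))) (img (phi GB) x')" by (rule isp_img[OF nonerasing_phi])
    have "x' m \<in> {0,1}" using bx by (simp add: bin_def)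
    then have "phi GB (x' m) = 0 # (if x' m = 1 then [1] else [])" by auto
    then obtain t where t: "phi GB (x' m) = 0 # t" by blast
    have "ext (phi GB) (pref x' (Suc m)) = (ext (phi GB) (pref x' m) @ [0]) @ t"
      by (simp add: pref_Suc t del: phi.simps)
    also have "\<dots> = (0 # ext (phi GA) (pref x' m)) @ t" using ext_GB_GA[OF bin_pref[OF bx]] by simp
    finally show "isp (ext (phi GA) (pref x' m)) (\<lambda>j. img (phi GB) x' (Suc j))"
      using i isp_Cons isp_append by (metis append_Cons)
  qed
qed

lemma img_id: "img (\<lambda>c. [c]) x = x"
  by (rule img_eqI) (auto simp: nonerasing_def isp_def ext_single)

lemma tail_gen:
  assumes bz: "bin z" and z0: "z 0 = 1" and g: "g \<in> {GA, GBe}"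
  shows "img (phi (H g)) (\<lambda>j. z (Suc j)) = (\<lambda>j. img (phi g) z (Suc j))" and "img (phi g) z 0 = 1"
proof -
  show "img (phi g) z 0 = 1" using img_block[OF nonerasing_phi, of 0 g z 0] z0 g by auto
  have bz': "set (pref (\<lambda>j. z (Suc j)) m) \<subseteq> {0,1}" for m
    using bz unfolding bin_def pref_def by (simp add: image_subset_iff)
  show "img (phi (H g)) (\<lambda>j. z (Suc j)) = (\<lambda>j. img (phi g) z (Suc j))"
  proof (rule img_eqI[OF nonerasing_phi])
    fix m
    have i: "isp (ext (phi g) (pref z (Suc m))) (img (phi g) z)" by (rule isp_img[OF nonerasing_phi])
    show "isp (ext (phi (H g)) (pref (\<lambda>j. z (Suc j)) m)) (\<lambda>j. img (phi g) z (Suc j))"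
    proof (cases "g = GA")
      case True
      have "ext (phi g) (pref z (Suc m)) = 1 # (ext (phi GB) (pref (\<lambda>j. z (Suc j)) m) @ [0])"
        using True z0 ext_GB_GA[OF bz'[of m]] by (simp add: pref_Suc_Cons)
      then show ?thesis using i True by (metis H.simps(1) isp_Cons isp_append)
    next
      case False
      then have "g = GBe" using g by auto
      then have "ext (phi g) (pref z (Suc m)) = 1 # ext (phi GBe) (pref (\<lambda>j. z (Suc j)) m)"
        using z0 by (simp add: pref_Suc_Cons)
      then show ?thesis using i \<open>g = GBe\<close> by (metis H.simps(4) isp_Cons)
    qed
  qed
qed

lemma phi_word_Nil_fun: "phi_word [] = (\<lambda>c. [c])" by simp

lemma tail_word:
  "set s \<subseteq> {GA, GBe} \<Longrightarrow> bin z \<Longrightarrow> z 0 = 1 \<Longrightarrow>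
   img (phi_word (map H s)) (\<lambda>j. z (Suc j)) = (\<lambda>j. img (phi_word s) z (Suc j)) \<and> img (phi_word s) z 0 = 1"
proof (induction s)
  case Nil then show ?case by (simp add: img_id)
next
  case (Cons g s)
  let ?w = "img (phi_word s) z"
  have IH: "img (phi_word (map H s)) (\<lambda>j. z (Suc j)) = (\<lambda>j. ?w (Suc j))" "?w 0 = 1"
    using Cons by auto
  have bw: "bin ?w" using bin_img_phi_word Cons.prems(2) by blast
  have g: "g \<in> {GA, GBe}" using Cons.prems(1) by auto
  have "img (phi_word (map H (g # s))) (\<lambda>j. z (Suc j)) = img (phi (H g)) (\<lambda>j. ?w (Suc j))"
    by (simp add: img_phi_word_Cons IH(1) del: phi_word.simps)
  also have "\<dots> = (\<lambda>j. img (phi g) ?w (Suc j))" using tail_gen(1)[OF bw IH(2) g] .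
  finally show ?case using tail_gen(2)[OF bw IH(2) g] by (simp add: img_phi_word_Cons del: phi_word.simps)
qed

lemma tail_fixed:
  assumes "set s \<subseteq> {GA, GBe}" "bin z" "z 0 = 1" "img (phi_word s) z = z"
  shows "img (phi_word (map H s)) (\<lambda>j. z (Suc j)) = (\<lambda>j. z (Suc j))"
  using tail_word[OF assms(1-3)] assms(4) by simp

lemma hd_ext: "xs \<noteq> [] \<Longrightarrow> nonerasing f \<Longrightarrow> hd (ext f xs) = hd (f (hd xs))"
  by (cases xs) (auto simp: nonerasing_def)

lemma hd_phi_word_1: "set r \<subseteq> {GA, GBe} \<Longrightarrow> GBe \<in> set r \<Longrightarrow> c \<in> {0,1} \<Longrightarrow> hd (phi_word r c) = 1"
proof (induction r)
  case Nil then show ?case by simp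
next
  case (Cons g r)
  have ne: "phi_word r c \<noteq> []" using nonerasing_phi_word by (simp add: nonerasing_def)
  have hb: "hd (phi_word r c) \<in> {0,1}" using set_phi_word_bin[OF Cons.prems(3), of r] ne hd_in_set by blast
  have "hd (phi_word (g # r) c) = hd (phi g (hd (phi_word r c)))"
    using hd_ext[OF ne nonerasing_phi] by simp
  moreover have "hd (phi g (hd (phi_word r c))) = 1"
  proof (cases "g = GBe")
    case True then show ?thesis using hb by auto
  next
    case False
    then have "g = GA" "GBe \<in> set r" using Cons.prems by auto
    then show ?thesis using Cons by auto
  qed
  ultimately show ?case by simp
qed

lemma img0: "nonerasing f \<Longrightarrow> img f x 0 = hd (f (x 0))"
  using img_block[of f 0 x 0] by (cases "f (x 0)") (auto simp: nonerasing_def)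

lemma fixed_first:
  assumes "set r \<subseteq> {GA, GBe}" "GBe \<in> set r" "bin x" "img (phi_word r) x = x"
  shows "x 0 = 1"
proof -
  have "x 0 = hd (phi_word r (x 0))" using img0[OF nonerasing_phi_word, of r x] assms(4) by simp
  then show ?thesis using hd_phi_word_1[OF assms(1,2)] assms(3) by (simp add: bin_def)
qed



lemma ret_bin: "bin x \<Longrightarrow> set (ret_seq x v n) \<subseteq> {0,1}"
  unfolding ret_seq_def bin_def by (simp add: image_subset_iff)

lemma Ps_zero: "nonerasing f \<Longrightarrow> Ps f x k = 0 \<Longrightarrow> k = 0"
  using Ps_strict_mono[of f x] by (metis Ps_0 gr0I less_not_refl2 strict_mono_less)

lemma HL1:
  assumes sig: "\<forall>c\<in>{0,1}. f c = (if c = e then [d,e] else [d])"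
    and de: "(d = 0 \<and> e = 1) \<or> (d = 1 \<and> e = 0)"
    and bx: "bin x'" and ne: "nonerasing f"
    and v: "v \<noteq> []" "Occ (img f x') v \<noteq> {}"
  shows "\<exists>v''. Occ x' v'' \<noteq> {} \<and> (length v'' < length v \<or> (v = [e] \<and> v'' = [e])) \<and>
     (infinite (Occ x' v'') \<longrightarrow> infinite (Occ (img f x') v)) \<and>
     (\<forall>z. infinite (Occ x' v'') \<longrightarrow> deq x' v'' z \<longrightarrow> deq (img f x') v z) \<and>
     ((hd v = d \<and> 0 \<in> Occ (img f x') v) \<or> (hd v = e \<and> 1 \<in> Occ (img f x') v) \<longrightarrow> 0 \<in> Occ x' v'')"
proof -
  let ?y = "img f x'"
  have byy: "bin ?y" using biny[OF sig de bx ne] .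
  obtain j where j: "occurs_at ?y v j" using v(2) by (auto simp: Occ_def)
  have "set v \<subseteq> {0,1}" using occurs_bin[OF byy j] .
  then have hv: "hd v = d \<or> hd v = e" using v(1) de by (cases v) auto
  have inj: "inj_on (ext f) (range (ret_seq x' w))" for w
  proof -
    have "range (ret_seq x' w) \<subseteq> {w. set w \<subseteq> {0,1}}" using ret_bin[OF bx] by auto
    then show ?thesis by (rule inj_on_subset[OF inj_ext_sig[OF sig de]])
  qed
  have infI: "infinite (g ` S)" if "inj g" "infinite S" for g :: "nat \<Rightarrow> nat" and S
    using that finite_imageD inj_on_subset subset_UNIV by metis
  have smP: "strict_mono (Ps f x')" using Ps_strict_mono[OF ne] .
  have injP: "inj (Ps f x')" using smP strict_mono_imp_inj_on by blast
  show ?thesis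
  proof (cases "hd v = d")
    case True
    let ?v = "prs d v"
    have O: "Occ ?y v = Ps f x' ` Occ x' ?v" using occ_parse[OF sig de bx ne v(1) True v(2)] .
    have "Occ x' ?v \<noteq> {}" using O v(2) by auto
    moreover have "length ?v < length v" using len_prs1[OF sig de bx ne v(1) True v(2)] .
    moreover have "infinite (Occ x' ?v) \<longrightarrow> infinite (Occ ?y v)"
      using O injP infI by metis
    moreover have "\<forall>z. infinite (Occ x' ?v) \<longrightarrow> deq x' ?v z \<longrightarrow> deq ?y v z"
    proof (intro allI impI)
      fix z assume inf: "infinite (Occ x' ?v)" and dz: "deq x' ?v z"
      show "deq ?y v z" using deq_transfer[OF ret_block[OF ne O inf] inj dz] .
    qed
    moreover have "(hd v = d \<and> 0 \<in> Occ ?y v) \<or> (hd v = e \<and> 1 \<in> Occ ?y v) \<longrightarrow> 0 \<in> Occ x' ?v"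
    proof
      assume "(hd v = d \<and> 0 \<in> Occ ?y v) \<or> (hd v = e \<and> 1 \<in> Occ ?y v)"
      then have "0 \<in> Occ ?y v" using True de by auto
      then obtain k where "k \<in> Occ x' ?v" "Ps f x' k = 0" using O by auto
      then show "0 \<in> Occ x' ?v" using Ps_zero[OF ne] by metis
    qed
    ultimately show ?thesis by blast
  next
    case False
    then have he: "hd v = e" using hv by simp
    let ?v = "prs d (d # v)"
    have Oe: "Occ ?y v = Suc ` Occ ?y (d # v)" using occ_e[OF sig de bx ne v(1) he] .
    have ne2: "Occ ?y (d # v) \<noteq> {}" using Oe v(2) by auto
    have O: "Occ ?y (d # v) = Ps f x' ` Occ x' ?v" using occ_parse[OF sig de bx ne _ _ ne2] by simp
    have "Occ x' ?v \<noteq> {}" using O ne2 by auto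
    moreover have "length ?v < length v \<or> (v = [e] \<and> ?v = [e])"
    proof (cases "v = [e]")
      case True then show ?thesis using prs_de[OF sig de bx ne] by simp
    next
      case False then show ?thesis using len_prs2[OF sig de bx ne v(1) he False ne2] by simp
    qed
    moreover have i1: "infinite (Occ x' ?v) \<longrightarrow> infinite (Occ ?y (d # v))"
      using O injP infI by metis
    moreover have "infinite (Occ x' ?v) \<longrightarrow> infinite (Occ ?y v)"
      using i1 Oe infI[OF inj_Suc] by metis
    moreover have "\<forall>z. infinite (Occ x' ?v) \<longrightarrow> deq x' ?v z \<longrightarrow> deq ?y v z"
    proof (intro allI impI)
      fix z assume inf: "infinite (Occ x' ?v)" and dz: "deq x' ?v z"
      have d1: "deq ?y (d # v) z" using deq_transfer[OF ret_block[OF ne O inf] inj dz] .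
      have inf2: "infinite (Occ ?y (d # v))" using i1 inf by blast
      have "range (ret_seq ?y (d # v)) \<subseteq> {r. r \<noteq> [] \<and> hd r = d}"
        using ret_left(2,3)[OF Oe inf2] by auto
      then have "inj_on (\<lambda>r. tl r @ [d]) (range (ret_seq ?y (d # v)))"
        by (rule inj_on_subset[OF inj_tl[of d]])
      then show "deq ?y v z" using deq_transfer[OF ret_left(1)[OF Oe inf2] _ d1] by simp
    qed
    moreover have "(hd v = d \<and> 0 \<in> Occ ?y v) \<or> (hd v = e \<and> 1 \<in> Occ ?y v) \<longrightarrow> 0 \<in> Occ x' ?v"
    proof
      assume "(hd v = d \<and> 0 \<in> Occ ?y v) \<or> (hd v = e \<and> 1 \<in> Occ ?y v)"
      then have "1 \<in> Occ ?y v" using False by auto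
      then have "0 \<in> Occ ?y (d # v)" using Oe by auto
      then obtain k where "k \<in> Occ x' ?v" "Ps f x' k = 0" using O by auto
      then show "0 \<in> Occ x' ?v" using Ps_zero[OF ne] by metis
    qed
    ultimately show ?thesis by blast
  qed
qed

definition dist :: "gen list \<Rightarrow> gen \<Rightarrow> nat" where
  "dist r G = length (takeWhile (\<lambda>g. g \<noteq> G) r)"

lemma dist_le: "dist r G \<le> length r"
  by (simp add: dist_def length_takeWhile_le)

lemma dist_rot: "g \<noteq> G \<Longrightarrow> G \<in> set r' \<Longrightarrow> dist (r' @ [g]) G < dist (g # r') G"
  by (simp add: dist_def takeWhile_append1)

definition mu :: "gen list \<Rightarrow> nat list \<Rightarrow> nat" where
  "mu r v = length v * (length r + 1) + (if v = [1] then dist r GBe else if v = [0] then dist r GA else 0)"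

lemma mu_bounds: "length v * (length r + 1) \<le> mu r v" "mu r v \<le> length v * (length r + 1) + length r"
  using dist_le[of r] by (auto simp: mu_def)

lemma mu_lt1: fixes r r1 :: "gen list" and v v'' :: "nat list" shows "length r1 = length r \<Longrightarrow> length v'' < length v \<Longrightarrow> mu r1 v'' < mu r v"
proof -
  assume a: "length r1 = length r" "length v'' < length v"
  have "mu r1 v'' \<le> length v'' * (length r + 1) + length r" using mu_bounds(2)[where v = v'' and r = r1] a by simp
  also have "\<dots> < (length v'' + 1) * (length r + 1)" by simp
  also have "\<dots> \<le> length v * (length r + 1)" using a(2) by (intro mult_right_mono) auto
  also have "\<dots> \<le> mu r v" by (rule mu_bounds(1))
  finally show ?thesis .
qed

definition good :: "gen list \<Rightarrow> nat \<Rightarrow> (nat \<Rightarrow> nat) \<Rightarrow> bool" where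
  "good r k z \<longleftrightarrow> img (phi_word (rotate k r)) z = z \<or> img (phi_word (map H (rotate k r))) z = z"

lemma rotate_snoc: "rotate k (r' @ [g]) = rotate (Suc k) (g # r')"
proof -
  show ?thesis using rotate_rotate[of k 1 "g # r'"] by simp
qed

lemma infI': "inj g \<Longrightarrow> infinite S \<Longrightarrow> infinite (g ` (S::nat set))" for g :: "nat \<Rightarrow> nat"
  using finite_imageD inj_on_subset subset_UNIV by metis

lemma main:
  fixes r :: "gen list" and x :: "nat \<Rightarrow> nat" and v :: "nat list"
  shows "set r \<subseteq> {GA,GBe} \<Longrightarrow> GA \<in> set r \<Longrightarrow> GBe \<in> set r \<Longrightarrow> bin x \<Longrightarrow>
   img (phi_word (if hk then map H r else r)) x = x \<Longrightarrow> Occ x v \<noteq> {} \<Longrightarrow>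
   infinite (Occ x v) \<and> (\<exists>k z. deq x v z \<and> bin z \<and> good r k z) \<and>
   (\<not> hk \<and> 0 \<in> Occ x v \<longrightarrow> (\<exists>k z. deq x v z \<and> bin z \<and> img (phi_word (rotate k r)) z = z \<and> z 0 = 1))"
proof (induction "mu r v" arbitrary: r x v hk rule: less_induct)
  case less
  note sr = less.prems(1) and ra = less.prems(2) and rb = less.prems(3) and bx = less.prems(4)
    and fxd = less.prems(5) and ox = less.prems(6)
  obtain g r' where r: "r = g # r'" using ra by (cases r) auto
  define r1 where "r1 = r' @ [g]"
  have sr1: "set r1 = set r" by (simp add: r1_def r)
  have lr1: "length r1 = length r" by (simp add: r1_def r)
  have rot: "rotate k r1 = rotate (Suc k) r" for k by (simp add: r1_def r rotate_snoc)
  have g: "g = GA \<or> g = GBe" using sr r by auto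
  have x0: "\<not> hk \<Longrightarrow> x 0 = 1" using fixed_first[OF sr rb bx] fxd by simp
  define W' where "W' = (if hk then map H r' else r')"
  define G' where "G' = (if hk then H g else g)"
  have W: "(if hk then map H r else r) = G' # W'" by (simp add: W'_def G'_def r)
  define x' where "x' = img (phi_word W') x"
  have bx': "bin x'" unfolding x'_def by (rule bin_img_phi_word[OF bx])
  have xx': "img (phi G') x' = x"
    using fxd W by (simp add: x'_def img_phi_word_Cons del: phi_word.simps)
  have W1: "(if hk then map H r1 else r1) = W' @ [G']" by (simp add: W'_def G'_def r1_def)
  have fx': "img (phi_word (if hk then map H r1 else r1)) x' = x'"
    unfolding W1 img_phi_word_snoc xx' by (simp add: x'_def)
  have IHgen: "infinite (Occ x' w) \<and> (\<exists>k z. deq x' w z \<and> bin z \<and> good r (Suc k) z) \<and>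
     (\<not> hk \<and> 0 \<in> Occ x' w \<longrightarrow> (\<exists>k z. deq x' w z \<and> bin z \<and> img (phi_word (rotate (Suc k) r)) z = z \<and> z 0 = 1))"
    if "mu r1 w < mu r v" "Occ x' w \<noteq> {}" for w
    using less.hyps[OF that(1) _ _ _ bx' fx' that(2)] sr1 sr ra rb by (simp add: good_def rot)
  show ?case
  proof (cases "v = []")
    case True
    have "infinite (Occ x v)" using True by (simp add: Occ_Nil)
    moreover have "deq x v x" using True deq_Nil by simp
    moreover have "good r 0 x" using fxd by (cases hk) (auto simp: good_def)
    moreover have "\<not> hk \<longrightarrow> img (phi_word (rotate 0 r)) x = x \<and> x 0 = 1" using fxd x0 by (cases hk) auto
    ultimately show ?thesis using bx by blast
  next
    case vne: False
    define f where "f = (if g = GBe then phi GBe else phi GB)"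
    define d where "d = (if g = GBe then 1 else (0::nat))"
    define e where "e = (if g = GBe then 0 else (1::nat))"
    have sig: "\<forall>c\<in>{0,1}. f c = (if c = e then [d,e] else [d])" using g by (auto simp: f_def d_def e_def)
    have de: "(d = 0 \<and> e = 1) \<or> (d = 1 \<and> e = 0)" by (simp add: d_def e_def)
    have ne: "nonerasing f" by (simp add: f_def nonerasing_phi)
    let ?y = "img f x'"
    have xy: "x = ?y" if "hk \<or> g = GBe"
      using xx' that g by (auto simp: G'_def f_def)
    have xs: "(\<forall>j. x j = ?y (Suc j)) \<and> ?y 0 = 0" if "\<not> hk" "g = GA"
      using xx' that img_GA_GB[OF bx'] by (auto simp: G'_def f_def)
    have oy: "Occ ?y v \<noteq> {}"
    proof (cases "hk \<or> g = GBe")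
      case True then show ?thesis using xy ox by simp
    next
      case False
      then have sh: "\<forall>j. x j = ?y (Suc j)" using xs g by auto
      obtain i where "occurs_at x v i" using ox by (auto simp: Occ_def)
      then have "occurs_at ?y v (Suc i)" using sh by (simp add: occurs_at_def)
      then show ?thesis by (auto simp: Occ_def)
    qed
    obtain v'' where v'': "Occ x' v'' \<noteq> {}" "length v'' < length v \<or> (v = [e] \<and> v'' = [e])"
      "infinite (Occ x' v'') \<longrightarrow> infinite (Occ ?y v)"
      "\<forall>z. infinite (Occ x' v'') \<longrightarrow> deq x' v'' z \<longrightarrow> deq ?y v z"
      "(hd v = d \<and> 0 \<in> Occ ?y v) \<or> (hd v = e \<and> 1 \<in> Occ ?y v) \<longrightarrow> 0 \<in> Occ x' v''"
      using HL1[OF sig de bx' ne vne oy] by blast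
    have lt: "mu r1 v'' < mu r v"
    proof (cases "length v'' < length v")
      case True then show ?thesis using mu_lt1[OF lr1] by blast
    next
      case False
      then have ve: "v = [e]" "v'' = [e]" using v''(2) by auto
      show ?thesis
      proof (cases "g = GBe")
        case True
        then have "GA \<in> set r'" using ra r by auto
        then have "dist r1 GA < dist r GA" using dist_rot[of g GA r'] True by (simp add: r r1_def)
        then show ?thesis using ve True lr1 by (simp add: mu_def e_def)
      next
        case False
        then have "g = GA" "GBe \<in> set r'" using g rb r by auto
        then have "dist r1 GBe < dist r GBe" using dist_rot[of g GBe r'] by (simp add: r r1_def)
        then show ?thesis using ve False lr1 by (simp add: mu_def e_def)
      qed
    qed
    obtain k z where IH: "infinite (Occ x' v'')" "deq x' v'' z" "bin z" "good r (Suc k) z"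
      "\<not> hk \<and> 0 \<in> Occ x' v'' \<longrightarrow> (\<exists>k z. deq x' v'' z \<and> bin z \<and> img (phi_word (rotate (Suc k) r)) z = z \<and> z 0 = 1)"
      using IHgen[OF lt v''(1)] by blast
    have infy: "infinite (Occ ?y v)" using v''(3) IH(1) by blast
    have dy: "\<And>z. deq x' v'' z \<Longrightarrow> deq ?y v z" using v''(4) IH(1) by blast
    show ?thesis
    proof (cases "hk \<or> g = GBe")
      case True
      have "\<not> hk \<and> 0 \<in> Occ x v \<longrightarrow> (\<exists>k z. deq x v z \<and> bin z \<and> img (phi_word (rotate k r)) z = z \<and> z 0 = 1)"
      proof
        assume a: "\<not> hk \<and> 0 \<in> Occ x v"
        then have "g = GBe" using True by simp
        have "hd v = x 0" using a vne by (cases v) (auto simp: Occ_def occurs_at_Cons)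
        then have "hd v = d" using x0 a \<open>g = GBe\<close> by (simp add: d_def)
        then have "0 \<in> Occ x' v''" using v''(5) a xy[OF True] by simp
        then obtain k' z' where "deq x' v'' z'" "bin z'" "img (phi_word (rotate (Suc k') r)) z' = z'" "z' 0 = 1"
          using IH(5) a by blast
        then show "\<exists>k z. deq x v z \<and> bin z \<and> img (phi_word (rotate k r)) z = z \<and> z 0 = 1"
          using dy xy[OF True] by blast
      qed
      then show ?thesis using infy dy[OF IH(2)] IH(3,4) xy[OF True] by blast
    next
      case False
      then have nhk: "\<not> hk" and gA: "g = GA" using g by auto
      have dd: "d = 0" "e = 1" using gA by (auto simp: d_def e_def)
      have sh: "\<forall>j. x j = ?y (Suc j)" "?y 0 = 0" using xs[OF nhk gA] by auto
      have yo: "Occ ?y v - {0} = Suc ` Occ x v"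
      proof
        show "Occ ?y v - {0} \<subseteq> Suc ` Occ x v"
        proof
          fix i assume "i \<in> Occ ?y v - {0}"
          then obtain i' where "i = Suc i'" "occurs_at ?y v (Suc i')" by (cases i) (auto simp: Occ_def)
          then show "i \<in> Suc ` Occ x v" using sh(1) by (auto simp: Occ_def occurs_at_def)
        qed
      next
        show "Suc ` Occ x v \<subseteq> Occ ?y v - {0}" using sh(1) by (auto simp: Occ_def occurs_at_def)
      qed
      have hx: "0 \<in> Occ x v \<Longrightarrow> hd v = 1" using x0[OF nhk] vne by (cases v) (auto simp: Occ_def occurs_at_Cons)
      show ?thesis
      proof (cases "0 \<in> Occ ?y v")
        case False
        then have O: "Occ ?y v = Suc ` Occ x v" using yo by auto
        have infx: "infinite (Occ x v)" using infy O by auto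
        have tr: "\<And>z. deq ?y v z \<Longrightarrow> deq x v z"
          using deq_eq ret_shift[OF _ O infx] sh(1) by metis
        have "\<not> hk \<and> 0 \<in> Occ x v \<longrightarrow> (\<exists>k z. deq x v z \<and> bin z \<and> img (phi_word (rotate k r)) z = z \<and> z 0 = 1)"
        proof
          assume a: "\<not> hk \<and> 0 \<in> Occ x v"
          then have "hd v = e" "1 \<in> Occ ?y v" using hx dd O by auto
          then have "0 \<in> Occ x' v''" using v''(5) by simp
          then obtain k' z' where "deq x' v'' z'" "bin z'" "img (phi_word (rotate (Suc k') r)) z' = z'" "z' 0 = 1"
            using IH(5) a by blast
          then show "\<exists>k z. deq x v z \<and> bin z \<and> img (phi_word (rotate k r)) z = z \<and> z 0 = 1"
            using dy tr by blast
        qed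
        then show ?thesis using infx tr dy IH(2,3,4) by blast
      next
        case True
        then have O: "Occ ?y v = insert 0 (Suc ` Occ x v)" using yo by auto
        have infx: "infinite (Occ x v)" using infy O by auto
        have hv: "hd v = d" using True sh(2) dd vne by (cases v) (auto simp: Occ_def occurs_at_Cons)
        then have "0 \<in> Occ x' v''" using v''(5) True by simp
        then obtain k' z' where z': "deq x' v'' z'" "bin z'" "img (phi_word (rotate (Suc k') r)) z' = z'" "z' 0 = 1"
          using IH(5) nhk by blast
        have "deq ?y v z'" using dy z'(1) .
        then have dx: "deq x v (\<lambda>n. z' (Suc n))" using deq_tail ret_shift0[OF _ O infx] sh(1) by metis
        have sr': "set (rotate (Suc k') r) \<subseteq> {GA, GBe}" using sr by simp
        have "img (phi_word (map H (rotate (Suc k') r))) (\<lambda>j. z' (Suc j)) = (\<lambda>j. z' (Suc j))"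
          using tail_fixed[OF sr' z'(2,4,3)] .
        then have gd: "good r (Suc k') (\<lambda>j. z' (Suc j))" by (simp add: good_def)
        have bz: "bin (\<lambda>j. z' (Suc j))" using z'(2) by (simp add: bin_def)
        have "\<not> (0 \<in> Occ x v)" using hx hv dd by auto
        then show ?thesis using infx dx gd bz by blast
      qed
    qed
  qed
qed



lemma mem_ext: "c \<in> set xs \<Longrightarrow> a \<in> set (f c) \<Longrightarrow> a \<in> set (ext f xs)"
  by (induction xs) auto

lemma mem_ext_all: "xs \<noteq> [] \<Longrightarrow> \<forall>c\<in>set xs. a \<in> set (f c) \<Longrightarrow> a \<in> set (ext f xs)"
  by (cases xs) auto

lemma has0: "set s \<subseteq> {GA,GB,GBe} \<Longrightarrow> c \<in> {0,1} \<Longrightarrow> (GA \<in> set s \<or> GB \<in> set s \<or> c = 0) \<Longrightarrow> 0 \<in> set (phi_word s c)"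
proof (induction s)
  case Nil then show ?case by auto
next
  case (Cons g s)
  have ne: "phi_word s c \<noteq> []" using nonerasing_phi_word by (simp add: nonerasing_def)
  have bs: "set (phi_word s c) \<subseteq> {0,1}" using set_phi_word_bin Cons.prems(2) by blast
  show ?case
  proof (cases "g = GBe")
    case True
    then have "0 \<in> set (phi_word s c)" using Cons by auto
    then show ?thesis using mem_ext[of 0 "phi_word s c" 0 "phi g"] True by simp
  next
    case False
    then have g: "g = GA \<or> g = GB" using Cons.prems(1) by auto
    have "\<forall>a\<in>set (phi_word s c). 0 \<in> set (phi g a)" using bs g by auto
    then show ?thesis using mem_ext_all[OF ne] by simp
  qed
qed

lemma has1: "set s \<subseteq> {GA,GB,GBe} \<Longrightarrow> c \<in> {0,1} \<Longrightarrow> (GBe \<in> set s \<or> c = 1) \<Longrightarrow> 1 \<in> set (phi_word s c)"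
proof (induction s)
  case Nil then show ?case by auto
next
  case (Cons g s)
  have ne: "phi_word s c \<noteq> []" using nonerasing_phi_word by (simp add: nonerasing_def)
  have bs: "set (phi_word s c) \<subseteq> {0,1}" using set_phi_word_bin Cons.prems(2) by blast
  show ?case
  proof (cases "g = GBe")
    case True
    have "\<forall>a\<in>set (phi_word s c). 1 \<in> set (phi g a)" using bs True by auto
    then show ?thesis using mem_ext_all[OF ne] by simp
  next
    case False
    then have g: "g = GA \<or> g = GB" using Cons.prems(1) by auto
    then have "1 \<in> set (phi_word s c)" using Cons False by auto
    then show ?thesis using mem_ext[of 1 "phi_word s c" 1 "phi g"] g by auto
  qed
qed

lemma prim_of_both: "(\<forall>c\<in>{0,1}. 0 \<in> set (f c) \<and> 1 \<in> set (f c)) \<Longrightarrow> primitive_morph f"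
  unfolding primitive_morph_def by (intro exI[of _ 1]) auto

lemma len_ext2: fixes f :: "nat \<Rightarrow> nat list" shows "(\<forall>c\<in>{0,1}. 2 \<le> length (f c)) \<Longrightarrow> set xs \<subseteq> {0,1} \<Longrightarrow> 2 * length xs \<le> length (ext f xs)"
  by (induction xs) auto

lemma sub_of_both:
  fixes f :: "nat \<Rightarrow> nat list" and c0 :: nat
  assumes b: "\<forall>c\<in>{0,1}. 0 \<in> set (f c) \<and> 1 \<in> set (f c) \<and> set (f c) \<subseteq> {0,1}"
    and c0: "c0 \<in> {0,1}" "hd (f c0) = c0"
  shows "substitution f"
proof -
  have l2: "\<forall>c\<in>{0,1}. 2 \<le> length (f c)"
  proof
    fix c :: nat assume c: "c \<in> {0,1}"
    then have "0 \<in> set (f c)" "1 \<in> set (f c)" using b by auto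
    then show "2 \<le> length (f c)"
      by (cases "f c"; cases "tl (f c)") auto
  qed
  have inv: "set ((ext f ^^ n) [c0]) \<subseteq> {0,1} \<and> Suc n \<le> length ((ext f ^^ n) [c0])" for n
  proof (induction n)
    case 0 then show ?case using c0 by simp
  next
    case (Suc n)
    let ?a = "(ext f ^^ n) [c0]"
    have "set (ext f ?a) \<subseteq> {0,1}" using set_ext_bin[of ?a f] Suc b by blast
    moreover have "2 * length ?a \<le> length (ext f ?a)" using len_ext2[OF l2] Suc by blast
    ultimately show ?case using Suc by simp
  qed
  have "f c0 \<noteq> []" using b c0 by auto
  then obtain t where t: "f c0 = c0 # t" using c0(2) by (cases "f c0") auto
  have "2 \<le> length (f c0)" using l2 c0(1) by blast
  then have "t \<noteq> []" using t by auto
  moreover have "filterlim (\<lambda>n. length ((ext f ^^ n) [c0])) at_top sequentially"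
    unfolding filterlim_at_top
  proof
    fix Z
    show "\<forall>\<^sub>F n in sequentially. Z \<le> length ((ext f ^^ n) [c0])"
      using inv by (intro eventually_sequentiallyI[of Z]) (meson le_SucI order_trans)
  qed
  ultimately show ?thesis unfolding substitution_def using c0 t by blast
qed

lemma hd_const: "set s \<subseteq> {GB,GBe} \<Longrightarrow> s \<noteq> [] \<Longrightarrow> a \<in> {0,1} \<Longrightarrow>
   hd (phi_word s a) = (if hd s = GBe then 1 else 0)"
proof (cases s)
  case (Cons g s')
  assume a: "set s \<subseteq> {GB,GBe}" "a \<in> {0,1}"
  have ne: "phi_word s' a \<noteq> []" using nonerasing_phi_word by (simp add: nonerasing_def)
  have hb: "hd (phi_word s' a) \<in> {0,1}" using set_phi_word_bin[OF a(2), of s'] ne hd_in_set by blast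
  have "hd (phi_word s a) = hd (phi g (hd (phi_word s' a)))"
    using hd_ext[OF ne nonerasing_phi] Cons by simp
  then show ?thesis using Cons a hb by auto
qed simp

lemma set_map_H: "set s \<subseteq> {GA,GBe} \<Longrightarrow> set (map H s) \<subseteq> {GB,GBe}"
  by auto

lemma prim_sub:
  assumes s: "set s \<subseteq> {GA,GBe}" "GA \<in> set s" "GBe \<in> set s"
  shows "primitive_morph (phi_word s) \<and> substitution (phi_word s)
       \<and> primitive_morph (phi_word (map H s)) \<and> substitution (phi_word (map H s))"
proof -
  have s3: "set s \<subseteq> {GA,GB,GBe}" using s(1) by auto
  have b1: "\<forall>c\<in>{0,1}. 0 \<in> set (phi_word s c) \<and> 1 \<in> set (phi_word s c) \<and> set (phi_word s c) \<subseteq> {0,1}"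
  proof
    fix c :: nat assume c: "c \<in> {0,1}"
    show "0 \<in> set (phi_word s c) \<and> 1 \<in> set (phi_word s c) \<and> set (phi_word s c) \<subseteq> {0,1}"
      using has0[OF s3 c] has1[OF s3 c] set_phi_word_bin[OF c] s by blast
  qed
  have sH: "set (map H s) \<subseteq> {GA,GB,GBe}" "GB \<in> set (map H s)" "GBe \<in> set (map H s)"
  proof -
    show "set (map H s) \<subseteq> {GA,GB,GBe}" using s(1) by auto
    show "GB \<in> set (map H s)" using s(2) by (metis H.simps(1) image_eqI set_map)
    show "GBe \<in> set (map H s)" using s(3) by (metis H.simps(4) image_eqI set_map)
  qed
  have b2: "\<forall>c\<in>{0,1}. 0 \<in> set (phi_word (map H s) c) \<and> 1 \<in> set (phi_word (map H s) c) \<and> set (phi_word (map H s) c) \<subseteq> {0,1}"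
  proof
    fix c :: nat assume c: "c \<in> {0,1}"
    show "0 \<in> set (phi_word (map H s) c) \<and> 1 \<in> set (phi_word (map H s) c) \<and> set (phi_word (map H s) c) \<subseteq> {0,1}"
      using has0[OF sH(1) c] has1[OF sH(1) c] set_phi_word_bin[OF c] sH by blast
  qed
  have "hd (phi_word s 1) = 1" using hd_phi_word_1[OF s(1) s(3)] by simp
  then have "substitution (phi_word s)"
    using sub_of_both[OF b1, of 1] by simp
  moreover have "substitution (phi_word (map H s))"
  proof -
    let ?c = "if hd (map H s) = GBe then 1 else (0::nat)"
    have "map H s \<noteq> []" using s by auto
    then have "hd (phi_word (map H s) ?c) = ?c" using hd_const[OF set_map_H[OF s(1)]] by simp
    then show ?thesis using sub_of_both[OF b2, of ?c] by simp
  qed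
  moreover have "primitive_morph (phi_word s)" by (rule prim_of_both) (use b1 in blast)
  moreover have "primitive_morph (phi_word (map H s))" by (rule prim_of_both) (use b2 in blast)
  ultimately show ?thesis by blast
qed

lemma bfp_iff: "nonerasing f \<Longrightarrow> bin_fixed_point f u \<longleftrightarrow> bin u \<and> img f u = u"
proof
  assume ne: "nonerasing f" and a: "bin_fixed_point f u"
  have "bin u" using a by (simp add: bin_fixed_point_def bin_def)
  moreover have "img f u = u"
  proof (rule img_eqI[OF ne])
    fix m
    have "ext f (pref u m) = pref u (length (ext f (pref u m)))" using a by (simp add: bin_fixed_point_def)
    then show "isp (ext f (pref u m)) u" unfolding isp_def by (metis nth_pref)
  qed
  ultimately show "bin u \<and> img f u = u" ..
next
  assume ne: "nonerasing f" and a: "bin u \<and> img f u = u"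
  have "ext f (pref u n) = pref u (length (ext f (pref u n)))" for n
    using pref_img[OF ne, of u n] a by (simp add: Ps_def)
  moreover have "\<exists>n. N \<le> length (ext f (pref u n))" for N
    using len_ext_ge[OF ne, of "pref u N"] by auto
  ultimately show "bin_fixed_point f u" using a by (simp add: bin_fixed_point_def bin_def)
qed

lemma Cset_finite: "finite (Cset x)"
proof (cases "x = []")
  case True then show ?thesis by (simp add: Cset_def)
next
  case False
  have "Cset x = (\<lambda>k. phi_word (rotate k x)) ` {..<length x}"
  proof
    show "Cset x \<subseteq> (\<lambda>k. phi_word (rotate k x)) ` {..<length x}"
    proof
      fix p assume "p \<in> Cset x"
      then obtain k where "p = phi_word (rotate k x)" by (auto simp: Cset_def)
      then have "p = phi_word (rotate (k mod length x) x)" by (simp add: rotate_conv_mod[symmetric])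
      then show "p \<in> (\<lambda>k. phi_word (rotate k x)) ` {..<length x}" using False by auto
    qed
  qed (auto simp: Cset_def)
  then show ?thesis by simp
qed

lemma prim_letters:
  assumes "set w \<subseteq> {GA, GBe}" "primitive_morph (phi_word w)"
  shows "GA \<in> set w" "GBe \<in> set w"
proof -
  obtain n where n: "\<forall>c\<in>{0,1}. \<forall>d\<in>{0,1::nat}. d \<in> set ((ext (phi_word w) ^^ n) [c])"
    using assms(2) by (auto simp: primitive_morph_def)
  show "GA \<in> set w"
  proof (rule ccontr)
    assume "GA \<notin> set w"
    then have s: "set w \<subseteq> {GBe}" using assms(1) by auto
    have "phi_word w 1 = [1]" using s by (induction w) auto
    then have "(ext (phi_word w) ^^ m) [1] = [1]" for m by (induction m) auto
    then show False using n by auto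
  qed
  show "GBe \<in> set w"
  proof (rule ccontr)
    assume "GBe \<notin> set w"
    then have s: "set w \<subseteq> {GA}" using assms(1) by auto
    have "phi_word w 0 = [0]" using s by (induction w) auto
    then have "(ext (phi_word w) ^^ m) [0] = [0]" for m by (induction m) auto
    then show False using n by auto
  qed
qed

theorem claim28:
  fixes w :: "gen list"
  assumes "set w \<subseteq> {GA, GBe}"
    and "primitive_morph (phi_word w)"
  shows "closed_under_derivation (Cset w \<union> Cset (map H w))"
proof -
  have wa: "GA \<in> set w" and wb: "GBe \<in> set w" using prim_letters[OF assms] by auto
  let ?M = "Cset w \<union> Cset (map H w)"
  have memM: "phi_word (rotate k w) \<in> ?M" "phi_word (map H (rotate k w)) \<in> ?M" for k
  proof -
    show "phi_word (rotate k w) \<in> ?M" unfolding Cset_def by blast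
    show "phi_word (map H (rotate k w)) \<in> ?M" unfolding Cset_def rotate_map[symmetric] by blast
  qed
  have caseM: "\<exists>k. (\<psi> = phi_word (rotate k w) \<or> \<psi> = phi_word (map H (rotate k w)))" if "\<psi> \<in> ?M" for \<psi>
  proof -
    have "\<psi> \<in> Cset w \<or> \<psi> \<in> Cset (map H w)" using that by blast
    then show ?thesis
    proof
      assume "\<psi> \<in> Cset w"
      then obtain k where "\<psi> = phi_word (rotate k w)" unfolding Cset_def by blast
      then show ?thesis by blast
    next
      assume "\<psi> \<in> Cset (map H w)"
      then obtain k where "\<psi> = phi_word (rotate k (map H w))" unfolding Cset_def by blast
      then show ?thesis unfolding rotate_map by blast
    qed
  qed
  have sw: "set (rotate k w) \<subseteq> {GA,GBe}" "GA \<in> set (rotate k w)" "GBe \<in> set (rotate k w)" for k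
    using assms(1) wa wb by simp_all
  have "finite ?M" using Cset_finite by simp
  moreover have "\<forall>\<phi>\<in>?M. primitive_morph \<phi> \<and> substitution \<phi>"
  proof
    fix \<phi> assume "\<phi> \<in> ?M"
    then obtain k where "\<phi> = phi_word (rotate k w) \<or> \<phi> = phi_word (map H (rotate k w))" using caseM by blast
    then show "primitive_morph \<phi> \<and> substitution \<phi>" using prim_sub[OF sw[of k]] by blast
  qed
  moreover have "\<forall>\<phi>\<in>?M. \<forall>u. bin_fixed_point \<phi> u \<longrightarrow> (\<forall>v. factor v u \<longrightarrow> (\<exists>\<psi>\<in>?M. derived_fixed_by u v \<psi>))"
  proof (intro ballI allI impI)
    fix \<phi> u v assume pM: "\<phi> \<in> ?M" and fp: "bin_fixed_point \<phi> u" and fv: "factor v u"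
    obtain k0 where k0: "\<phi> = phi_word (rotate k0 w) \<or> \<phi> = phi_word (map H (rotate k0 w))" using caseM[OF pM] by blast
    let ?s = "rotate k0 w"
    obtain hk where hk: "\<phi> = phi_word (if hk then map H ?s else ?s)"
    proof (cases "\<phi> = phi_word ?s")
      case True then show ?thesis using that[of False] by simp
    next
      case False then show ?thesis using that[of True] k0 by simp
    qed
    have bu: "bin u" and fu: "img (phi_word (if hk then map H ?s else ?s)) u = u"
      using fp hk bfp_iff[OF nonerasing_phi_word] by auto
    have ou: "Occ u v \<noteq> {}" using fv by (auto simp: factor_def Occ_def)
    obtain k z where kz: "deq u v z" "bin z" "good ?s k z"
      using main[OF sw bu fu ou] by blast
    obtain p where p: "inj_on p (range (ret_seq u v))" "\<And>n. p (ret_seq u v n) = z n"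
      using kz(1) by (auto simp: deq_def)
    have pz: "p \<circ> ret_seq u v = z" using p(2) by auto
    have rr: "rotate k ?s = rotate (k + k0) w" by (simp add: rotate_rotate)
    show "\<exists>\<psi>\<in>?M. derived_fixed_by u v \<psi>"
    proof (cases "img (phi_word (rotate k ?s)) z = z")
      case True
      have "bin_fixed_point (phi_word (rotate (k + k0) w)) (p \<circ> ret_seq u v)"
        using bfp_iff[OF nonerasing_phi_word] True kz(2) pz rr by simp
      then show ?thesis using memM p(1) by (auto simp: derived_fixed_by_def)
    next
      case False
      then have "img (phi_word (map H (rotate k ?s))) z = z" using kz(3) by (simp add: good_def)
      then have "bin_fixed_point (phi_word (map H (rotate (k + k0) w))) (p \<circ> ret_seq u v)"
        using bfp_iff[OF nonerasing_phi_word] kz(2) pz rr by simp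
      then show ?thesis using memM p(1) by (auto simp: derived_fixed_by_def)
    qed
  qed
  ultimately show ?thesis by (simp add: closed_under_derivation_def)
qed

end
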